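(* Let $a\in(0,1]$, $b>0$, and let $q\in(0,1]$ with $q+a>1$. Let $I_n$ be the first decrement of the block-counting process of the $\mathrm{Beta}(a,b)$-coalescent started at $n$, and let $\xi$ be a random variable with $\mathbb{P}\{\xi=k\}=p^{(a)}_k:=\frac{(2-a)\Gamma(k+a-1)}{\Gamma(a)(k+1)!}$, $k\in\mathbb{N}$. Then $$\sum_{k=1}^{n-1}k^q\big|\mathbb{P}\{I_n=k\}-\mathbb{P}\{\xi=k\}\big|=O(n^{a+q-2}),\qquad n\to\infty.$$
   Context: For the $\mathrm{Beta}(a,b)$-coalescent, $\Lambda$ has density $x^{a-1}(1-x)^{b-1}/\mathrm{B}(a,b)$ on $[0,1]$; set $\lambda_{n,k}=\int_0^1x^{k-2}(1-x)^{n-k}\Lambda(dx)$ for $2\le k\le n$ and $\lambda_n=\sum_{k=2}^n\binom nk\lambda_{n,k}$. The first decrement $I_n$ has law $\mathbb{P}\{I_n=k\}=\binom{n}{k+1}\lambda_{n,k+1}/\lambda_n$, $1\le k\le n-1$. *)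

theory Defs
  imports "HOL-Analysis.Analysis" "HOL-Library.Landau_Symbols"
begin

definition beta_density :: "real \<Rightarrow> real \<Rightarrow> real \<Rightarrow> real" where
  "beta_density a b x = x powr (a - 1) * (1 - x) powr (b - 1) / Beta a b"

definition lambda_nk :: "real \<Rightarrow> real \<Rightarrow> nat \<Rightarrow> nat \<Rightarrow> real" where
  "lambda_nk a b n k = (LBINT x=0..1. x ^ (k - 2) * (1 - x) ^ (n - k) * beta_density a b x)"

definition lambda_n :: "real \<Rightarrow> real \<Rightarrow> nat \<Rightarrow> real" where
  "lambda_n a b n = (\<Sum>k=2..n. real (n choose k) * lambda_nk a b n k)"

definition first_decrement_prob :: "real \<Rightarrow> real \<Rightarrow> nat \<Rightarrow> nat \<Rightarrow> real" where
  "first_decrement_prob a b n k = real (n choose (k + 1)) * lambda_nk a b n (k + 1) / lambda_n a b n"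

definition p_xi :: "real \<Rightarrow> nat \<Rightarrow> real" where
  "p_xi a k = (2 - a) * Gamma (real k + a - 1) / (Gamma a * fact (k + 1))"

end

theory Submission
  imports Defs
begin

lemma H_lim:
  fixes z :: real assumes z: "z > 0"
  shows "(\<lambda>n. fact (n-1) * real n powr z / Gamma (real n + z)) \<longlonglongrightarrow> 1"
proof -
  have zn: "z \<notin> \<int>\<^sub>\<le>\<^sub>0" using z by (auto elim!: nonpos_Ints_cases)
  have gz: "Gamma z \<noteq> 0" using zn by (simp add: Gamma_eq_zero_iff)
  have "(\<lambda>n. Gamma_series' z n / Gamma z) \<longlonglongrightarrow> Gamma z / Gamma z"
    using gz by (intro tendsto_intros Gamma_series'_LIMSEQ) auto
  hence L: "(\<lambda>n. Gamma_series' z n / Gamma z) \<longlonglongrightarrow> 1" using gz by simp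
  show ?thesis
  proof (rule Lim_transform_eventually[OF L])
    show "\<forall>\<^sub>F n in sequentially. Gamma_series' z n / Gamma z = fact (n-1) * real n powr z / Gamma (real n + z)"
      using eventually_gt_at_top[of "0::nat"]
    proof eventually_elim
      case (elim n)
      have "pochhammer z n = Gamma (z + real n) / Gamma z" using pochhammer_Gamma[OF zn] by simp
      moreover have "Gamma (z + real n) \<noteq> 0" using z by (simp add: Gamma_eq_zero_iff) (auto elim!: nonpos_Ints_cases)
      ultimately show ?case using elim gz
        by (simp add: Gamma_series'_def powr_def add.commute field_simps)
    qed
  qed
qed

lemma powr_step_le:
  fixes t :: real and k :: nat
  assumes t: "0 < t" "t \<le> 1" and k: "k \<ge> 1"
  shows "real k powr (t - 1) \<le> (real k powr t - real (k-1) powr t) / t"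
proof (cases "k = 1")
  case True thus ?thesis using t by simp
next
  case False
  hence k2: "k \<ge> 2" using k by simp
  have kpos: "real k > 0" using k by simp
  have "((real k - 1) / real k) powr t * 1 powr (1 - t) \<le> t * ((real k - 1) / real k) + (1 - t) * 1"
    using k2 t by (intro Youngs_inequality_0) auto
  hence "((real k - 1) / real k) powr t \<le> 1 - t / real k"
    using kpos by (simp add: field_simps)
  hence "(real k - 1) powr t / real k powr t \<le> 1 - t / real k"
    using k2 by (simp add: powr_divide)
  hence "(real k - 1) powr t \<le> real k powr t - t * (real k powr t / real k)"
    using kpos by (simp add: field_simps)
  moreover have "real k powr t / real k = real k powr (t - 1)"
    using kpos by (simp add: powr_diff)
  ultimately have "(real k - 1) powr t \<le> real k powr t - t * real k powr (t - 1)" by simp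
  moreover have "real (k - 1) = real k - 1" using k by simp
  ultimately show ?thesis using t by (simp add: field_simps)
qed

lemma sum_powr_le_neg:
  fixes s :: real
  assumes s: "-1 < s" "s \<le> 0"
  shows "(\<Sum>k=1..N. real k powr s) \<le> real N powr (s+1) / (s+1)"
proof (induction N)
  case 0 thus ?case by simp
next
  case (Suc N)
  have "(\<Sum>k=1..Suc N. real k powr s) = (\<Sum>k=1..N. real k powr s) + real (Suc N) powr s"
    by simp
  also have "\<dots> \<le> real N powr (s+1) / (s+1) + (real (Suc N) powr (s+1) - real (Suc N - 1) powr (s+1)) / (s+1)"
    using Suc powr_step_le[of "s+1" "Suc N"] s by simp
  also have "\<dots> = real (Suc N) powr (s+1) / (s+1)" by (simp add: diff_divide_distrib)
  finally show ?case .
qed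

lemma sum_powr_le_pos:
  fixes s :: real
  assumes s: "0 \<le> s"
  shows "(\<Sum>k=1..N. real k powr s) \<le> real N powr (s+1)"
proof -
  have "(\<Sum>k=1..N. real k powr s) \<le> (\<Sum>k=1..N. real N powr s)"
    by (intro sum_mono powr_mono2) (use s in auto)
  also have "\<dots> = real N * real N powr s" by simp
  also have "\<dots> = real N powr (s+1)"
    by (cases "N = 0") (simp_all add: powr_add)
  finally show ?thesis .
qed

lemma sum_powr_le:
  fixes s :: real
  assumes s: "-1 < s"
  obtains C where "C > 0" "\<And>N. (\<Sum>k=1..N. real k powr s) \<le> C * real N powr (s+1)"
proof (cases "s \<le> 0")
  case True
  show ?thesis
    by (rule that[of "1/(s+1)"]) (use s True sum_powr_le_neg[of s] in auto)
next
  case False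
  show ?thesis by (rule that[of 1]) (use False sum_powr_le_pos[of s] in auto)
qed

lemma abs_exp_minus_one_le: fixes y :: real shows "\<bar>exp y - 1\<bar> \<le> \<bar>y\<bar> * exp \<bar>y\<bar>"
proof (cases "y \<ge> 0")
  case True
  have "exp (-y) \<ge> 1 + (-y)" using exp_ge_add_one_self[of "-y"] by simp
  hence "exp (-y) * exp y \<ge> (1 - y) * exp y" by (intro mult_right_mono) auto
  hence "1 \<ge> (1 - y) * exp y" by (simp add: exp_minus field_simps)
  thus ?thesis using True by (simp add: algebra_simps)
next
  case False
  have "exp y \<ge> 1 + y" by (rule exp_ge_add_one_self)
  moreover have "exp y \<le> 1" using False by simp
  moreover have "exp \<bar>y\<bar> \<ge> 1" by simp
  ultimately show ?thesis using False
    by (smt (verit) mult_le_cancel_left1)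
qed

lemma D_bound:
  fixes r :: "nat \<Rightarrow> real" and b c1 c2 L :: real and n k :: nat
  assumes r_pos: "\<And>m. r m > 0"
    and r_up: "\<And>m. r m \<le> c2 * (real m + 1) powr (b-1)"
    and r_lo: "\<And>m. c1 * (real m + 1) powr (b-1) \<le> r m" and c1: "c1 > 0"
    and rl: "\<And>m d. \<bar>ln (r (m+d)) - ln (r m)\<bar> \<le> L * real d / (real m + 1)" and L: "L \<ge> 0"
    and n: "n \<ge> 2" and k: "1 \<le> k" "k \<le> n - 1"
  shows "\<bar>r (n-1-k) - r (n-2)\<bar> / r (n-2) \<le>
     (if 2*k \<le> n then 2 * L * exp L * real k / real n
      else 1 + c2 / c1 * real (n-k) powr (b-1) * real (n-1) powr (1-b))"
proof -
  define R where "R = r (n-2)"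
  define \<rho> where "\<rho> = r (n-1-k)"
  have Rpos: "R > 0" and rpos: "\<rho> > 0" using r_pos by (auto simp: R_def \<rho>_def)
  have nk: "real (n-1-k) + 1 = real n - real k" using n k by (simp add: of_nat_diff)
  show ?thesis
  proof (cases "2*k \<le> n")
    case True
    define y where "y = ln R - ln \<rho>"
    have "n - 2 = (n-1-k) + (k-1)" using n k by simp
    hence "\<bar>y\<bar> \<le> L * real (k-1) / (real (n-1-k) + 1)"
      using rl[of "n-1-k" "k-1"] by (simp add: y_def R_def \<rho>_def)
    also have "\<dots> = L * (real k - 1) / (real n - real k)" using nk k by (simp add: of_nat_diff)
    also have "\<dots> \<le> L * (2 * real k / real n)"
    proof -
      have nkpos: "real n - real k > 0" using True k by linarith
      have "real (2*k) \<le> real n" using True by (simp only: of_nat_le_iff)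
      hence "real n \<le> 2*(real n - real k)" by simp
      hence "real k * real n \<le> real k * (2*(real n - real k))" by (intro mult_left_mono) auto
      hence "(real k - 1) * real n \<le> 2 * real k * (real n - real k)" by (simp add: algebra_simps)
      hence "(real k - 1) / (real n - real k) \<le> 2 * real k / real n"
        using nkpos n by (simp add: field_simps)
      hence "L * ((real k - 1) / (real n - real k)) \<le> L * (2 * real k / real n)" using L by (intro mult_left_mono) auto
      thus ?thesis by simp
    qed
    finally have y1: "\<bar>y\<bar> \<le> 2 * L * real k / real n" by (simp add: mult_ac)
    have y2: "\<bar>y\<bar> \<le> L"
    proof -
      have "2 * real k / real n \<le> 1" using True n by (simp add: field_simps)
      hence "L * (2 * real k / real n) \<le> L * 1" using L by (intro mult_left_mono) auto
      thus ?thesis using y1 by (simp add: mult_ac)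
    qed
    have "\<rho> / R = exp (-y)" using Rpos rpos by (simp add: y_def exp_diff)
    hence "\<rho> = R * exp (-y)" using Rpos by (simp add: field_simps)
    hence "\<rho> - R = R * (exp (-y) - 1)" by (simp add: algebra_simps)
    hence "\<bar>\<rho> - R\<bar> / R = \<bar>exp (-y) - 1\<bar>" using Rpos by (simp add: abs_mult)
    also have "\<dots> \<le> \<bar>y\<bar> * exp \<bar>y\<bar>" using abs_exp_minus_one_le[of "-y"] by simp
    also have "\<dots> \<le> (2 * L * real k / real n) * exp L"
      using y1 y2 by (intro mult_mono) auto
    finally show ?thesis using True by (simp add: R_def \<rho>_def mult_ac)
  next
    case False
    have "\<bar>\<rho> - R\<bar> / R \<le> (\<rho> + R) / R" using Rpos rpos by (intro divide_right_mono) auto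
    also have "\<dots> = 1 + \<rho> / R" using Rpos by (simp add: field_simps)
    also have "\<rho> / R \<le> c2 / c1 * real (n-k) powr (b-1) * real (n-1) powr (1-b)"
    proof -
      have r1: "\<rho> \<le> c2 * real (n-k) powr (b-1)" using r_up[of "n-1-k"] nk k n by (simp add: \<rho>_def of_nat_diff)
      have "real (n-2) + 1 = real (n-1)" using n by (simp add: of_nat_diff)
      hence r2: "c1 * real (n-1) powr (b-1) \<le> R" using r_lo[of "n-2"] by (simp add: R_def)
      have pp: "real (n-1) powr (b-1) > 0" using n by simp
      have "\<rho> / R \<le> c2 * real (n-k) powr (b-1) / (c1 * real (n-1) powr (b-1))"
        using r1 r2 rpos c1 pp by (intro frac_le) auto
      also have "\<dots> = c2 / c1 * real (n-k) powr (b-1) * real (n-1) powr (1-b)"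
      proof -
        have "real (n-1) powr (1-b) = real (n-1) powr (-(b-1))" by simp
        also have "\<dots> = inverse (real (n-1) powr (b-1))" by (rule powr_minus)
        finally have e: "real (n-1) powr (1-b) = inverse (real (n-1) powr (b-1))" .
        show ?thesis unfolding e using pp c1 by (simp add: field_simps)
      qed
      finally show ?thesis .
    qed
    finally show ?thesis using False by (simp add: R_def \<rho>_def)
  qed
qed

lemma W_bound:
  fixes p D Cp KA KB X a q' :: real and n k :: nat
  assumes p_le: "p \<le> Cp * real k powr (a-3)" and p0: "0 \<le> p" and Cp: "0 \<le> Cp"
    and D0: "0 \<le> D"
    and D: "D \<le> (if 2*k \<le> n then KA * real k / real n else 1 + KB * X)"
    and X: "0 \<le> X" and KA: "0 \<le> KA" and KB: "0 \<le> KB"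
    and q': "0 \<le> q'" "a + q' - 3 \<le> 0" and k: "1 \<le> k" "k \<le> n - 1"
  shows "real k powr q' * p * D \<le> Cp * KA * real k powr (a+q'-2) / real n
           + Cp * (real n / 2) powr (a+q'-3) * (1 + KB * X)"
proof -
  have kpos: "real k > 0" using k by simp
  have npos: "real n > 0" using k by simp
  have kp: "real k powr q' * p \<le> Cp * real k powr (a+q'-3)"
  proof -
    have "real k powr q' * p \<le> real k powr q' * (Cp * real k powr (a-3))"
      using p_le by (intro mult_left_mono) auto
    also have "\<dots> = Cp * real k powr (a+q'-3)" using kpos by (simp add: powr_add[symmetric] algebra_simps)
    finally show ?thesis .
  qed
  have t1: "0 \<le> Cp * KA * real k powr (a+q'-2) / real n" using Cp KA by simp
  have t2: "0 \<le> Cp * (real n / 2) powr (a+q'-3) * (1 + KB * X)" using Cp KB X by simp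
  show ?thesis
  proof (cases "2*k \<le> n")
    case True
    have "real k powr q' * p * D \<le> Cp * real k powr (a+q'-3) * (KA * real k / real n)"
    proof (rule mult_mono[OF kp])
      show "D \<le> KA * real k / real n" using D True by simp
    qed (use D0 Cp in auto)
    also have "\<dots> = Cp * KA * (real k powr (a+q'-3) * real k) / real n" by (simp add: field_simps)
    also have "real k powr (a+q'-3) * real k = real k powr (a+q'-2)"
    proof -
      have "real k powr (a+q'-2) = real k powr ((a+q'-3) + 1)" by simp
      also have "\<dots> = real k powr (a+q'-3) * real k powr 1" by (rule powr_add)
      finally show ?thesis using kpos by simp
    qed
    finally show ?thesis using t2 by simp
  next
    case False
    have "real n / 2 \<le> real k" using False by linarith
    hence kk: "real k powr (a+q'-3) \<le> (real n / 2) powr (a+q'-3)"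
      using q' npos by (intro powr_mono2') auto
    have "real k powr q' * p * D \<le> Cp * real k powr (a+q'-3) * (1 + KB * X)"
    proof (rule mult_mono[OF kp])
      show "D \<le> 1 + KB * X" using D False by simp
    qed (use D0 Cp in auto)
    also have "\<dots> \<le> Cp * (real n / 2) powr (a+q'-3) * (1 + KB * X)"
      using kk Cp KB X by (intro mult_right_mono mult_left_mono) auto
    finally show ?thesis using t1 by simp
  qed
qed

lemma sum_rev_powr:
  fixes c :: real and n :: nat
  shows "(\<Sum>k=1..n-1. real (n-k) powr c) = (\<Sum>k=1..n-1. real k powr c)"
proof (cases "n \<ge> 1")
  case True
  have "(\<Sum>k=1..n-1. real k powr c) = (\<Sum>k=1..n-1. real (n - 1 + 1 - k) powr c)"
    by (rule sum.atLeastAtMost_rev)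
  also have "\<dots> = (\<Sum>k=1..n-1. real (n-k) powr c)" using True by simp
  finally show ?thesis by simp
qed simp

lemma sum_WD:
  fixes r p :: "nat \<Rightarrow> real" and a b c1 c2 L Cp q' :: real and n :: nat
  assumes r_pos: "\<And>m. r m > 0"
    and r_up: "\<And>m. r m \<le> c2 * (real m + 1) powr (b-1)"
    and r_lo: "\<And>m. c1 * (real m + 1) powr (b-1) \<le> r m" and c1: "c1 > 0" and c2: "c2 \<ge> 0"
    and rl: "\<And>m d. \<bar>ln (r (m+d)) - ln (r m)\<bar> \<le> L * real d / (real m + 1)" and L: "L \<ge> 0"
    and p0: "\<And>k. k \<ge> 1 \<Longrightarrow> 0 \<le> p k" and p_le: "\<And>k. k \<ge> 1 \<Longrightarrow> p k \<le> Cp * real k powr (a-3)" and Cp: "0 \<le> Cp"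
    and q': "0 \<le> q'" "a + q' - 3 \<le> 0"
    and n: "n \<ge> 2"
  shows "(\<Sum>k=1..n-1. real k powr q' * p k * (\<bar>r (n-1-k) - r (n-2)\<bar> / r (n-2)))
     \<le> Cp * (2 * L * exp L) / real n * (\<Sum>k=1..n-1. real k powr (a+q'-2))
       + Cp * (real n / 2) powr (a+q'-3) * (real (n-1) + c2/c1 * real (n-1) powr (1-b) * (\<Sum>k=1..n-1. real k powr (b-1)))"
proof -
  define B where "B = Cp * (real n / 2) powr (a+q'-3)"
  have "(\<Sum>k=1..n-1. real k powr q' * p k * (\<bar>r (n-1-k) - r (n-2)\<bar> / r (n-2)))
      \<le> (\<Sum>k=1..n-1. Cp * (2 * L * exp L) * real k powr (a+q'-2) / real n + B * (1 + (c2 / c1 * real (n-k) powr (b-1)) * real (n-1) powr (1-b)))"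
  proof (rule sum_mono)
    fix k assume "k \<in> {1..n-1}"
    hence k: "1 \<le> k" "k \<le> n-1" by auto
    have Db: "\<bar>r (n-1-k) - r (n-2)\<bar> / r (n-2) \<le>
     (if 2*k \<le> n then 2 * L * exp L * real k / real n
      else 1 + c2 / c1 * real (n-k) powr (b-1) * real (n-1) powr (1-b))"
      by (rule D_bound[OF r_pos r_up r_lo c1 rl L n k])
    show "real k powr q' * p k * (\<bar>r (n-1-k) - r (n-2)\<bar> / r (n-2))
      \<le> Cp * (2 * L * exp L) * real k powr (a+q'-2) / real n + B * (1 + (c2 / c1 * real (n-k) powr (b-1)) * real (n-1) powr (1-b))"
      unfolding B_def
    proof (rule W_bound[where KA="2 * L * exp L" and KB="c2 / c1 * real (n-k) powr (b-1)" and X="real (n-1) powr (1-b)", OF p_le[OF k(1)] p0[OF k(1)] Cp _ Db _ _ _ q' k])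
      show "0 \<le> \<bar>r (n-1-k) - r (n-2)\<bar> / r (n-2)" using r_pos[of "n-2"] by simp
      show "0 \<le> real (n-1) powr (1-b)" by simp
      show "0 \<le> 2 * L * exp L" using L by simp
      show "0 \<le> c2 / c1 * real (n-k) powr (b-1)" using c1 c2 by simp
    qed
  qed
  also have "\<dots> = Cp * (2 * L * exp L) / real n * (\<Sum>k=1..n-1. real k powr (a+q'-2))
      + B * (real (n-1) + c2/c1 * real (n-1) powr (1-b) * (\<Sum>k=1..n-1. real (n-k) powr (b-1)))"
    using n by (simp add: sum.distrib sum_distrib_left sum_divide_distrib sum_distrib_right algebra_simps)
  also have "(\<Sum>k=1..n-1. real (n-k) powr (b-1)) = (\<Sum>k=1..n-1. real k powr (b-1))"
    by (rule sum_rev_powr)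
  finally show ?thesis by (simp add: B_def)
qed

lemma half_pow: fixes N x :: real assumes "N \<ge> 1"
  shows "(N/2) powr x * N = 2 powr (-x) * N powr (x+1)"
proof -
  have 1: "(N/2) powr x = N powr x / 2 powr x" by (rule powr_divide)
  have 2: "2 powr (-x) = inverse (2 powr x)" by (rule powr_minus)
  have "N powr (x+1) = N powr x * N powr 1" by (rule powr_add)
  hence 3: "N powr (x+1) = N powr x * N" using assms by simp
  show ?thesis unfolding 1 2 3 by (simp add: divide_inverse mult_ac)
qed

lemma pow_le_mono: fixes N u v :: real assumes "N \<ge> 1" "u \<le> v" shows "N powr u \<le> N powr v"
  by (rule powr_mono[OF assms(2) assms(1)])

lemma main_est:
  fixes r p :: "nat \<Rightarrow> real" and a b q c1 c2 L Cp Ct :: real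
  assumes r_pos: "\<And>m. r m > 0"
    and r_up: "\<And>m. r m \<le> c2 * (real m + 1) powr (b-1)"
    and r_lo: "\<And>m. c1 * (real m + 1) powr (b-1) \<le> r m" and c1: "c1 > 0" and c2: "c2 \<ge> 0"
    and rl: "\<And>m d. \<bar>ln (r (m+d)) - ln (r m)\<bar> \<le> L * real d / (real m + 1)" and L: "L \<ge> 0"
    and p_pos: "\<And>k. k \<ge> 1 \<Longrightarrow> 0 < p k" and p_le: "\<And>k. k \<ge> 1 \<Longrightarrow> p k \<le> Cp * real k powr (a-3)" and Cp: "0 \<le> Cp"
    and tail: "\<And>n. n \<ge> 2 \<Longrightarrow> \<bar>1 - (\<Sum>k=1..n-1. p k)\<bar> \<le> Ct / real n" and Ct: "Ct \<ge> 0"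
    and a: "0 < a" "a \<le> 1" and q: "0 < q" "q \<le> 1" and aq: "a + q > 1" and b: "b > 0"
  shows "\<exists>C. \<forall>n\<ge>2. (\<Sum>k=1..n-1. real k powr q * \<bar>p k * r (n-1-k) / (\<Sum>j=1..n-1. p j * r (n-1-j)) - p k\<bar>)
            \<le> C * real n powr (a+q-2)"
proof -
  define e where "e = a + q - 1"
  have e: "0 < e" "e \<le> 1" using a q aq by (auto simp: e_def field_simps)
  obtain Cs1 where Cs1: "Cs1 > 0" "\<And>N. (\<Sum>k=1..N. real k powr (a+q-2)) \<le> Cs1 * real N powr (a+q-2+1)"
    using sum_powr_le[of "a+q-2"] aq by auto
  obtain Cs2 where Cs2: "Cs2 > 0" "\<And>N. (\<Sum>k=1..N. real k powr (b-1)) \<le> Cs2 * real N powr (b-1+1)"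
    using sum_powr_le[of "b-1"] b by auto
  obtain Cs3 where Cs3: "Cs3 > 0" "\<And>N. (\<Sum>k=1..N. real k powr (e/2-1)) \<le> Cs3 * real N powr (e/2-1+1)"
    using sum_powr_le[of "e/2-1"] e by auto
  define K1 where "K1 = 2 * L * exp L"
  define K3 where "K3 = c2 / c1"
  have K1: "K1 \<ge> 0" using L by (simp add: K1_def)
  have K3: "K3 \<ge> 0" using c1 c2 by (simp add: K3_def)
  define CA where "CA = Cp * K1 * Cs1 + Cp * 2 powr (3-(a+q)) * (1 + K3 * Cs2)"
  define CE where "CE = Ct + Cp * K1 * Cs3 + Cp * 2 powr (3-a) * (1 + K3 * Cs2)"
  define C where "C = (CA + CE * Cp * Cs3) / p 1"
  have p1: "p 1 > 0" using p_pos by simp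
  show ?thesis
  proof (intro exI allI impI)
    fix n :: nat assume n: "n \<ge> 2"
    define N where "N = real n"
    have N1: "N \<ge> 1" and Npos: "N > 0" using n by (auto simp: N_def)
    define R where "R = r (n-2)"
    define \<rho> where "\<rho> = (\<lambda>k. r (n-1-k))"
    define S where "S = (\<Sum>j=1..n-1. p j * \<rho> j)"
    define D where "D = (\<lambda>k. \<bar>\<rho> k - R\<bar> / R)"
    define E where "E = \<bar>1 - (\<Sum>k=1..n-1. p k)\<bar> + (\<Sum>j=1..n-1. p j * D j)"
    define A where "A = (\<Sum>k=1..n-1. real k powr q * p k * D k)"
    define W where "W = (\<Sum>k=1..n-1. real k powr q * p k)"
    have Rpos: "R > 0" using r_pos by (simp add: R_def)
    have \<rho>pos: "\<And>k. \<rho> k > 0" using r_pos by (simp add: \<rho>_def)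
    have D0: "\<And>k. D k \<ge> 0" using Rpos by (simp add: D_def)
    have pnn: "\<And>k. k \<in> {1..n-1} \<Longrightarrow> p k \<ge> 0" using p_pos by (simp add: less_imp_le)
    have SR: "S \<ge> p 1 * R"
    proof -
      have "p 1 * \<rho> 1 \<le> S" unfolding S_def
        by (rule member_le_sum) (use n in \<open>auto intro!: mult_nonneg_nonneg pnn less_imp_le[OF \<rho>pos]\<close>)
      moreover have "\<rho> 1 = R" by (simp add: \<rho>_def R_def numeral_2_eq_2)
      ultimately show ?thesis by simp
    qed
    have "p 1 * R > 0" using p1 Rpos by simp
    hence Spos: "S > 0" using SR by linarith
    have RS: "\<bar>R - S\<bar> \<le> R * E"
    proof -
      have "R - S = R * (1 - (\<Sum>k=1..n-1. p k)) + (\<Sum>j=1..n-1. p j * (R - \<rho> j))"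
      proof -
        have "(\<Sum>j=1..n-1. p j * (R - \<rho> j)) = R * (\<Sum>k=1..n-1. p k) - S"
          by (simp add: S_def sum_distrib_left right_diff_distrib sum_subtractf mult.commute)
        thus ?thesis by (simp add: right_diff_distrib)
      qed
      also have "\<bar>\<dots>\<bar> \<le> R * \<bar>1 - (\<Sum>k=1..n-1. p k)\<bar> + (\<Sum>j=1..n-1. p j * (R * D j))"
      proof -
        have "\<bar>\<Sum>j=1..n-1. p j * (R - \<rho> j)\<bar> \<le> (\<Sum>j=1..n-1. \<bar>p j * (R - \<rho> j)\<bar>)" by (rule sum_abs)
        also have "\<dots> = (\<Sum>j=1..n-1. p j * (R * D j))"
          by (intro sum.cong) (use pnn Rpos in \<open>auto simp: D_def abs_mult\<close>)
        moreover have "\<bar>R * (1 - (\<Sum>k=1..n-1. p k))\<bar> = R * \<bar>1 - (\<Sum>k=1..n-1. p k)\<bar>" using Rpos by (simp add: abs_mult)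
        ultimately show ?thesis using abs_triangle_ineq[of "R * (1 - (\<Sum>k=1..n-1. p k))" "\<Sum>j=1..n-1. p j * (R - \<rho> j)"]
          by linarith
      qed
      also have "\<dots> = R * E"
      proof -
        have "(\<Sum>j=1..n-1. p j * (R * D j)) = R * (\<Sum>j=1..n-1. p j * D j)"
          by (simp add: sum_distrib_left mult.left_commute)
        thus ?thesis by (simp add: E_def distrib_left)
      qed
      finally show ?thesis .
    qed
    have termb: "real k powr q * \<bar>p k * \<rho> k / S - p k\<bar> \<le> (real k powr q * p k * D k + real k powr q * p k * E) / p 1"
      if k: "k \<in> {1..n-1}" for k
    proof -
      have pk: "p k \<ge> 0" using pnn k by simp
      have "\<bar>\<rho> k - S\<bar> \<le> \<bar>\<rho> k - R\<bar> + \<bar>R - S\<bar>" by simp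
      also have "\<dots> \<le> R * D k + R * E" using RS Rpos by (simp add: D_def)
      finally have a1: "\<bar>\<rho> k - S\<bar> \<le> R * (D k + E)" by (simp add: algebra_simps)
      have "\<bar>p k * \<rho> k / S - p k\<bar> = p k * \<bar>\<rho> k - S\<bar> / S"
      proof -
        have "p k * (\<rho> k - S) / S = p k * \<rho> k / S - p k * S / S" by (simp add: right_diff_distrib diff_divide_distrib)
        hence "p k * \<rho> k / S - p k = p k * (\<rho> k - S) / S" using Spos by simp
        thus ?thesis using Spos pk by (simp add: abs_mult)
      qed
      also have "\<dots> \<le> p k * (R * (D k + E)) / (p 1 * R)"
        using a1 pk SR Spos p1 Rpos by (intro frac_le mult_left_mono) auto
      also have "\<dots> = p k * (D k + E) / p 1" using Rpos by (simp add: mult.commute[of "p 1" R] mult.assoc[symmetric])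
      finally have "\<bar>p k * \<rho> k / S - p k\<bar> \<le> p k * (D k + E) / p 1" .
      hence "real k powr q * \<bar>p k * \<rho> k / S - p k\<bar> \<le> real k powr q * (p k * (D k + E) / p 1)"
        by (intro mult_left_mono) auto
      thus ?thesis by (simp add: algebra_simps add_divide_distrib)
    qed
    have main1: "(\<Sum>k=1..n-1. real k powr q * \<bar>p k * \<rho> k / S - p k\<bar>) \<le> (A + E * W) / p 1"
    proof -
      have "(\<Sum>k=1..n-1. real k powr q * \<bar>p k * \<rho> k / S - p k\<bar>)
          \<le> (\<Sum>k=1..n-1. (real k powr q * p k * D k + real k powr q * p k * E) / p 1)"
        by (rule sum_mono) (rule termb)
      also have "\<dots> = (\<Sum>k=1..n-1. real k powr q * p k * D k + real k powr q * p k * E) / p 1"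
        by (simp add: sum_divide_distrib)
      also have "(\<Sum>k=1..n-1. real k powr q * p k * D k + real k powr q * p k * E) = A + W * E"
        by (simp add: sum.distrib sum_distrib_right A_def W_def)
      also have "(A + W * E) / p 1 = (A + E * W) / p 1" by (simp add: mult.commute)
      finally show ?thesis .
    qed
    have M1: "real (n-1) \<ge> 1" using n by simp
    have MN: "real (n-1) \<le> N" by (simp add: N_def)
    have rwD: "\<And>k. D k = \<bar>r (n-1-k) - r (n-2)\<bar> / r (n-2)" by (simp add: D_def \<rho>_def R_def)
    have sb: "real (n-1) powr (1-b) * (\<Sum>k=1..n-1. real k powr (b-1)) \<le> Cs2 * real (n-1)"
    proof -
      have "real (n-1) powr (1-b) * (\<Sum>k=1..n-1. real k powr (b-1)) \<le> real (n-1) powr (1-b) * (Cs2 * real (n-1) powr (b-1+1))"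
        using Cs2(2)[of "n-1"] by (intro mult_left_mono) auto
      also have "\<dots> = Cs2 * (real (n-1) powr (1-b) * real (n-1) powr b)" by simp
      also have "real (n-1) powr (1-b) * real (n-1) powr b = real (n-1)"
        using M1 by (simp add: powr_add[symmetric])
      finally show ?thesis by simp
    qed
    have Abound: "A \<le> CA * N powr (a+q-2)"
    proof -
      have "A \<le> Cp * (2 * L * exp L) / real n * (\<Sum>k=1..n-1. real k powr (a+q-2))
       + Cp * (real n / 2) powr (a+q-3) * (real (n-1) + c2/c1 * real (n-1) powr (1-b) * (\<Sum>k=1..n-1. real k powr (b-1)))"
        unfolding A_def rwD
        by (rule sum_WD[OF r_pos r_up r_lo c1 c2 rl L less_imp_le[OF p_pos] p_le Cp _ _ n]) (use q a in auto)
      also have "\<dots> \<le> Cp * K1 / N * (Cs1 * N powr (a+q-1))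
       + Cp * (N / 2) powr (a+q-3) * (N + K3 * (Cs2 * N))"
      proof -
        have h1: "(\<Sum>k=1..n-1. real k powr (a+q-2)) \<le> Cs1 * N powr (a+q-1)"
        proof -
          have "(\<Sum>k=1..n-1. real k powr (a+q-2)) \<le> Cs1 * real (n-1) powr (a+q-1)"
            using Cs1(2)[of "n-1"] by simp
          also have "\<dots> \<le> Cs1 * N powr (a+q-1)"
            using Cs1 MN M1 aq by (intro mult_left_mono powr_mono2) auto
          finally show ?thesis .
        qed
        have "c2/c1 * real (n-1) powr (1-b) * (\<Sum>k=1..n-1. real k powr (b-1)) \<le> K3 * (Cs2 * real (n-1))"
          using mult_left_mono[OF sb K3] by (simp add: K3_def)
        also have "\<dots> \<le> K3 * (Cs2 * N)" using MN K3 Cs2 by (intro mult_left_mono) auto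
        finally have h2: "real (n-1) + c2/c1 * real (n-1) powr (1-b) * (\<Sum>k=1..n-1. real k powr (b-1)) \<le> N + K3 * (Cs2 * N)"
          using MN by linarith
        have c1': "0 \<le> Cp * (2 * L * exp L) / real n" using Cp L by simp
        have c2': "0 \<le> Cp * (real n / 2) powr (a+q-3)" using Cp by simp
        from add_mono[OF mult_left_mono[OF h1 c1'] mult_left_mono[OF h2 c2']]
        show ?thesis by (simp add: K1_def N_def)
      qed
      also have "\<dots> = Cp * K1 * Cs1 * (N powr (a+q-1) / N) + Cp * (1 + K3 * Cs2) * ((N/2) powr (a+q-3) * N)"
        by (simp add: algebra_simps)
      also have "N powr (a+q-1) / N = N powr (a+q-2)"
      proof -
        have "N powr (a+q-2) = N powr ((a+q-1) - 1)" by simp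
        also have "\<dots> = N powr (a+q-1) / N powr 1" by (rule powr_diff)
        finally show ?thesis using Npos by simp
      qed
      also have "(N/2) powr (a+q-3) * N = 2 powr (3-(a+q)) * N powr (a+q-2)"
        using half_pow[OF N1, of "a+q-3"] by simp
      finally show ?thesis by (simp add: CA_def algebra_simps)
    qed
    have Bbound: "(\<Sum>j=1..n-1. p j * D j) \<le> (Cp * K1 * Cs3 + Cp * 2 powr (3-a) * (1 + K3 * Cs2)) * N powr (e/2-1)"
    proof -
      have "(\<Sum>j=1..n-1. p j * D j) = (\<Sum>k=1..n-1. real k powr 0 * p k * D k)"
        by (intro sum.cong) auto
      also have "\<dots> \<le> Cp * (2 * L * exp L) / real n * (\<Sum>k=1..n-1. real k powr (a+0-2))
       + Cp * (real n / 2) powr (a+0-3) * (real (n-1) + c2/c1 * real (n-1) powr (1-b) * (\<Sum>k=1..n-1. real k powr (b-1)))"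
        unfolding rwD
        by (rule sum_WD[OF r_pos r_up r_lo c1 c2 rl L less_imp_le[OF p_pos] p_le Cp _ _ n]) (use q a in auto)
      also have "\<dots> \<le> Cp * K1 / N * (Cs3 * N powr (e/2))
       + Cp * (N / 2) powr (a-3) * (N + K3 * (Cs2 * N))"
      proof -
        have h1: "(\<Sum>k=1..n-1. real k powr (a+0-2)) \<le> Cs3 * N powr (e/2)"
        proof -
          have "(\<Sum>k=1..n-1. real k powr (a+0-2)) \<le> (\<Sum>k=1..n-1. real k powr (e/2-1))"
            using a e by (intro sum_mono powr_mono) (auto simp: e_def field_simps)
          also have "\<dots> \<le> Cs3 * real (n-1) powr (e/2)"
            using Cs3(2)[of "n-1"] by simp
          also have "\<dots> \<le> Cs3 * N powr (e/2)"
            using Cs3 MN M1 e by (intro mult_left_mono powr_mono2) auto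
          finally show ?thesis .
        qed
        have "c2/c1 * real (n-1) powr (1-b) * (\<Sum>k=1..n-1. real k powr (b-1)) \<le> K3 * (Cs2 * real (n-1))"
          using mult_left_mono[OF sb K3] by (simp add: K3_def)
        also have "\<dots> \<le> K3 * (Cs2 * N)" using MN K3 Cs2 by (intro mult_left_mono) auto
        finally have h2: "real (n-1) + c2/c1 * real (n-1) powr (1-b) * (\<Sum>k=1..n-1. real k powr (b-1)) \<le> N + K3 * (Cs2 * N)"
          using MN by linarith
        have c1': "0 \<le> Cp * (2 * L * exp L) / real n" using Cp L by simp
        have c2': "0 \<le> Cp * (real n / 2) powr (a+0-3)" using Cp by simp
        from add_mono[OF mult_left_mono[OF h1 c1'] mult_left_mono[OF h2 c2']]
        show ?thesis by (simp add: K1_def N_def)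
      qed
      also have "\<dots> = Cp * K1 * Cs3 * (N powr (e/2) / N) + Cp * (1 + K3 * Cs2) * ((N/2) powr (a-3) * N)"
        by (simp add: algebra_simps)
      also have "N powr (e/2) / N = N powr (e/2-1)"
      proof -
        have "N powr (e/2-1) = N powr (e/2) / N powr 1" by (rule powr_diff)
        thus ?thesis using Npos by simp
      qed
      also have "(N/2) powr (a-3) * N = 2 powr (3-a) * N powr (a-2)"
        using half_pow[OF N1, of "a-3"] by simp
      also have "Cp * K1 * Cs3 * N powr (e/2-1) + Cp * (1 + K3 * Cs2) * (2 powr (3-a) * N powr (a-2))
          \<le> Cp * K1 * Cs3 * N powr (e/2-1) + Cp * (1 + K3 * Cs2) * (2 powr (3-a) * N powr (e/2-1))"
      proof -
        have "N powr (a-2) \<le> N powr (e/2-1)" using N1 a e by (intro powr_mono) (auto simp: e_def field_simps)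
        hence "2 powr (3-a) * N powr (a-2) \<le> 2 powr (3-a) * N powr (e/2-1)" by simp
        moreover have "Cp * (1 + K3 * Cs2) \<ge> 0" using Cp K3 Cs2 by simp
        ultimately show ?thesis by (meson add_left_mono mult_left_mono)
      qed
      finally show ?thesis by (simp add: algebra_simps)
    qed
    have Ebound: "E \<le> CE * N powr (e/2-1)"
    proof -
      have "\<bar>1 - (\<Sum>k=1..n-1. p k)\<bar> \<le> Ct / N" using tail[OF n] by (simp add: N_def)
      also have "Ct / N = Ct * N powr (-1)" using Npos by (simp add: powr_minus divide_inverse)
      also have "\<dots> \<le> Ct * N powr (e/2-1)" using Ct N1 e by (intro mult_left_mono powr_mono) auto
      finally show ?thesis using Bbound by (simp add: E_def CE_def algebra_simps)
    qed
    have E0: "E \<ge> 0" unfolding E_def using pnn D0 by (intro add_nonneg_nonneg sum_nonneg) auto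
    have Wbound: "W \<le> Cp * Cs3 * N powr (e/2)"
    proof -
      have "W \<le> (\<Sum>k=1..n-1. Cp * real k powr (e/2-1))"
        unfolding W_def
      proof (rule sum_mono)
        fix k assume k: "k \<in> {1..n-1}"
        have "real k powr q * p k \<le> real k powr q * (Cp * real k powr (a-3))"
          using p_le k by (intro mult_left_mono) auto
        also have "\<dots> = Cp * real k powr (a+q-3)" using k by (simp add: powr_add[symmetric] algebra_simps)
        also have "\<dots> \<le> Cp * real k powr (e/2-1)" using k e Cp by (intro mult_left_mono powr_mono) (auto simp: e_def field_simps)
        finally show "real k powr q * p k \<le> Cp * real k powr (e/2-1)" .
      qed
      also have "\<dots> = Cp * (\<Sum>k=1..n-1. real k powr (e/2-1))" by (simp add: sum_distrib_left)
      also have "\<dots> \<le> Cp * (Cs3 * real (n-1) powr (e/2))" using Cs3(2)[of "n-1"] Cp by (intro mult_left_mono) auto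
      also have "\<dots> \<le> Cp * (Cs3 * N powr (e/2))"
        using Cs3 MN M1 e Cp by (intro mult_left_mono powr_mono2) auto
      finally show ?thesis by simp
    qed
    have W0: "W \<ge> 0" unfolding W_def by (intro sum_nonneg mult_nonneg_nonneg) (auto simp: pnn)
    have CE0: "CE \<ge> 0" using Ct Cp K1 K3 Cs3 Cs2 by (simp add: CE_def)
    have EW: "E * W \<le> CE * Cp * Cs3 * N powr (a+q-2)"
    proof -
      have "E * W \<le> (CE * N powr (e/2-1)) * (Cp * Cs3 * N powr (e/2))"
        using Ebound Wbound E0 CE0 W0 by (intro mult_mono) auto
      also have "N powr (e/2-1) * N powr (e/2) = N powr (a+q-2)"
        using Npos by (simp add: powr_add[symmetric] e_def)
      ultimately show ?thesis by (simp add: algebra_simps)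
    qed
    have "(\<Sum>k=1..n-1. real k powr q * \<bar>p k * r (n-1-k) / (\<Sum>j=1..n-1. p j * r (n-1-j)) - p k\<bar>)
        = (\<Sum>k=1..n-1. real k powr q * \<bar>p k * \<rho> k / S - p k\<bar>)" by (simp add: S_def \<rho>_def)
    also have "\<dots> \<le> (A + E * W) / p 1" by (rule main1)
    also have "\<dots> \<le> (CA * N powr (a+q-2) + CE * Cp * Cs3 * N powr (a+q-2)) / p 1"
      using Abound EW p1 by (intro divide_right_mono add_mono) auto
    also have "\<dots> = (CA + CE * Cp * Cs3) * N powr (a+q-2) / p 1" by (simp add: distrib_right)
    also have "\<dots> = C * real n powr (a+q-2)" by (simp add: C_def N_def)
    finally show "(\<Sum>k=1..n-1. real k powr q * \<bar>p k * r (n-1-k) / (\<Sum>j=1..n-1. p j * r (n-1-j)) - p k\<bar>)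
            \<le> C * real n powr (a+q-2)" .
  qed
qed

lemma Gamma_pos_real: fixes x :: real shows "x > 0 \<Longrightarrow> Gamma x > 0"
  by (rule Gamma_real_pos)

lemma Gamma_rec_pos: fixes z :: real assumes "z > 0" shows "Gamma (z + 1) = z * Gamma z"
  using assms by (intro Gamma_plus1) (auto elim!: nonpos_Ints_cases)

lemma G_upper:
  fixes z :: real assumes z: "z > 0"
  obtains K where "K > 0" "\<And>n. n \<ge> 1 \<Longrightarrow> Gamma (real n + z) \<le> K * (fact (n-1) * real n powr z)"
proof -
  have "(\<lambda>n. inverse (fact (n-1) * real n powr z / Gamma (real n + z))) \<longlonglongrightarrow> inverse 1"
    by (intro tendsto_inverse H_lim z) simp
  hence "Bseq (\<lambda>n. inverse (fact (n-1) * real n powr z / Gamma (real n + z)))"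
    by (intro convergent_imp_Bseq) (auto simp: convergent_def)
  then obtain K where K: "K > 0" "\<And>n. norm (inverse (fact (n-1) * real n powr z / Gamma (real n + z))) \<le> K"
    by (auto simp: Bseq_def)
  show ?thesis
  proof (rule that[OF K(1)])
    fix n :: nat assume n: "n \<ge> 1"
    have g: "Gamma (real n + z) > 0" using n z by (intro Gamma_real_pos) auto
    have f: "fact (n-1) * real n powr z > (0::real)" using n by simp
    have "Gamma (real n + z) / (fact (n-1) * real n powr z) \<le> K"
      using K(2)[of n] g f by simp
    thus "Gamma (real n + z) \<le> K * (fact (n-1) * real n powr z)"
      using f by (simp add: divide_le_eq)
  qed
qed

lemma G_lower:
  fixes z :: real assumes z: "z > 0"
  obtains c where "c > 0" "\<And>n. n \<ge> 1 \<Longrightarrow> c * (fact (n-1) * real n powr z) \<le> Gamma (real n + z)"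
proof -
  have "Bseq (\<lambda>n. fact (n-1) * real n powr z / Gamma (real n + z))"
    using H_lim[OF z] by (intro convergent_imp_Bseq) (auto simp: convergent_def)
  then obtain K where K: "K > 0" "\<And>n. norm (fact (n-1) * real n powr z / Gamma (real n + z)) \<le> K"
    by (auto simp: Bseq_def)
  show ?thesis
  proof (rule that[of "1/K"])
    show "1/K > 0" using K by simp
    fix n :: nat assume n: "n \<ge> 1"
    have g: "Gamma (real n + z) > 0" using n z by (intro Gamma_real_pos) auto
    have f: "fact (n-1) * real n powr z > (0::real)" using n by simp
    have "fact (n-1) * real n powr z / Gamma (real n + z) \<le> K"
      using K(2)[of n] g f by simp
    hence "fact (n-1) * real n powr z \<le> K * Gamma (real n + z)"
      using g by (simp add: divide_le_eq mult.commute)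
    thus "1/K * (fact (n-1) * real n powr z) \<le> Gamma (real n + z)"
      using K by (simp add: field_simps)
  qed
qed

lemma p_xi_pos:
  fixes a :: real assumes a: "0 < a" "a \<le> 1" and k: "k \<ge> 1"
  shows "p_xi a k > 0"
proof -
  have "Gamma (real k + a - 1) > 0" using a k by (intro Gamma_real_pos) auto
  moreover have "Gamma a > 0" using a by (intro Gamma_real_pos) auto
  ultimately show ?thesis using a by (simp add: p_xi_def)
qed

lemma aux1: fixes f k k1 a K x :: real
  shows "f > 0 \<Longrightarrow> k > 0 \<Longrightarrow> a > 0 \<Longrightarrow> k1 > 0 \<Longrightarrow> K * (f * x) / (a * k) / (k1 * k * f) = K / a * (x / (k * k * k1))"
  by (simp add: field_simps)

lemma aux2: fixes P G0 Ga f m a :: real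
  assumes P: "P = (2 - a) * G0 / (Ga * ((m + 1) * f))" and Ga: "Ga > 0" and f: "f > 0" and m: "m \<ge> 0"
  shows "P + 1 - G0 / (Ga * f) = 1 - (m + a - 1) * G0 / (Ga * ((m + 1) * f))"
proof -
  define D where "D = Ga * ((m + 1) * f)"
  have Dp: "D > 0" using Ga f m by (simp add: D_def)
  have 1: "G0 / (Ga * f) = (m + 1) * G0 / D" using Ga f m by (simp add: D_def)
  have "P + 1 - G0 / (Ga * f) = 1 + ((2 - a) * G0 - (m + 1) * G0) / D"
    unfolding 1 P D_def[symmetric] by (simp add: diff_divide_distrib)
  also have "(2 - a) * G0 - (m + 1) * G0 = - ((m + a - 1) * G0)" by (simp add: algebra_simps)
  finally show ?thesis by (simp add: D_def)
qed

lemma p_xi_le: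
  fixes a :: real assumes a: "0 < a" "a \<le> 1"
  obtains Cp where "Cp \<ge> 0" "\<And>k. k \<ge> 1 \<Longrightarrow> p_xi a k \<le> Cp * real k powr (a-3)"
proof -
  obtain K where K: "K > 0" "\<And>n. n \<ge> 1 \<Longrightarrow> Gamma (real n + a) \<le> K * (fact (n-1) * real n powr a)"
    using G_upper[OF a(1)] by blast
  have ga: "Gamma a > 0" using a by (intro Gamma_real_pos) auto
  show ?thesis
  proof (rule that[of "(2-a) * K / (Gamma a * a)"])
    show "(2-a) * K / (Gamma a * a) \<ge> 0" using a K ga by simp
    fix k :: nat assume k: "k \<ge> 1"
    have kpos: "real k > 0" using k by simp
    have x: "real k + a - 1 > 0" using a k by simp
    have g1: "Gamma (real k + a) = (real k + a - 1) * Gamma (real k + a - 1)"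
      using Gamma_rec_pos[of "real k + a - 1"] x by simp
    have "Gamma (real k + a - 1) = Gamma (real k + a) / (real k + a - 1)"
      using g1 x by simp
    also have "\<dots> \<le> K * (fact (k-1) * real k powr a) / (a * real k)"
    proof (rule frac_le)
      show "0 \<le> K * (fact (k-1) * real k powr a)" using K by simp
      show "Gamma (real k + a) \<le> K * (fact (k-1) * real k powr a)" using K(2)[OF k] .
      show "0 < a * real k" using a kpos by simp
      have "real k + a - 1 - a * real k = (real k - 1) * (1 - a)" by (simp add: algebra_simps)
      also have "\<dots> \<ge> 0" using k a by simp
      finally show "a * real k \<le> real k + a - 1" by simp
    qed
    finally have G: "Gamma (real k + a - 1) \<le> K * (fact (k-1) * real k powr a) / (a * real k)" .
    have fk: "fact (k+1) = real (k+1) * real k * fact (k-1)"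
      using fact_reduce[of "k+1"] fact_reduce[of k] k by simp
    have "p_xi a k = (2-a) / Gamma a * (Gamma (real k + a - 1) / fact (k+1))"
      by (simp add: p_xi_def)
    also have "\<dots> \<le> (2-a) / Gamma a * (K * (fact (k-1) * real k powr a) / (a * real k) / fact (k+1))"
      using G a ga by (intro mult_left_mono divide_right_mono) auto
    also have "K * (fact (k-1) * real k powr a) / (a * real k) / fact (k+1)
        = K / a * (real k powr a / (real k * real k * real (k+1)))"
      unfolding fk by (rule aux1) (use kpos a in auto)
    also have "(2-a) / Gamma a * (K / a * (real k powr a / (real k * real k * real (k+1)))) \<le> (2-a) / Gamma a * (K / a * real k powr (a-3))"
    proof (intro mult_left_mono)
      have "real k powr a / (real k * real k * real (k+1)) \<le> real k powr a / (real k * real k * real k)"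
        using kpos by (intro divide_left_mono mult_left_mono) auto
      also have "real k powr a / (real k * real k * real k) = real k powr (a-3)"
      proof -
        have "real k powr (a-3) = real k powr a / real k powr 3" by (simp add: powr_diff)
        also have "real k powr 3 = real k ^ 3" using kpos by (simp add: powr_realpow)
        finally show ?thesis by (simp add: power3_eq_cube)
      qed
      finally show "real k powr a / (real k * real k * real (k+1)) \<le> real k powr (a-3)" .
    qed (use K a ga in auto)
    finally have "p_xi a k \<le> (2 - a) / Gamma a * (K / a * real k powr (a - 3))" .
    thus "p_xi a k \<le> (2-a) * K / (Gamma a * a) * real k powr (a-3)"
      by (simp add: field_simps)
  qed
qed

lemma p_xi_partial_sum:
  fixes a :: real assumes a: "0 < a" "a \<le> 1" and n: "n \<ge> 1"
  shows "(\<Sum>k=1..n-1. p_xi a k) = 1 - Gamma (real n + a - 1) / (Gamma a * fact n)"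
  using n
proof (induction n rule: dec_induct)
  case base
  have "Gamma a > 0" using a by (intro Gamma_real_pos) auto
  hence "Gamma a \<noteq> 0" by linarith
  thus ?case by simp
next
  case (step m)
  have ga: "Gamma a > 0" using a by (intro Gamma_real_pos) auto
  have g1: "Gamma (real m + a) = (real m + a - 1) * Gamma (real m + a - 1)"
  proof -
    have "real m \<ge> 1" using step(1) by simp
    hence "real m + a - 1 > 0" using a by simp
    thus ?thesis using Gamma_rec_pos[of "real m + a - 1"] by simp
  qed
  have "{1..Suc m - 1} = insert m {1..m-1}" using step by auto
  hence "(\<Sum>k=1..Suc m - 1. p_xi a k) = (\<Sum>k\<in>insert m {1..m-1}. p_xi a k)" by simp
  also have "\<dots> = p_xi a m + (\<Sum>k=1..m-1. p_xi a k)" by (rule sum.insert) auto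
  also have "\<dots> = p_xi a m + 1 - Gamma (real m + a - 1) / (Gamma a * fact m)" using step by simp
  also have "\<dots> = 1 - Gamma (real (Suc m) + a - 1) / (Gamma a * fact (Suc m))"
  proof -
    have e1: "Gamma (real (Suc m) + a - 1) = (real m + a - 1) * Gamma (real m + a - 1)"
      using g1 by (simp add: add_ac)
    have e2: "(fact (Suc m) :: real) = (real m + 1) * fact m" by (simp add: fact_Suc)
    have e3: "Suc m + 1 = Suc (Suc m)" by simp
    have "p_xi a m = (2 - a) * Gamma (real m + a - 1) / (Gamma a * ((real m + 1) * fact m))"
      by (simp add: p_xi_def e2[symmetric])
    thus ?thesis unfolding e1 e2 by (rule aux2) (use ga in auto)
  qed
  finally show ?case .
qed

lemma p_xi_tail:
  fixes a :: real assumes a: "0 < a" "a \<le> 1"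
  obtains Ct where "Ct \<ge> 0" "\<And>n. n \<ge> 2 \<Longrightarrow> \<bar>1 - (\<Sum>k=1..n-1. p_xi a k)\<bar> \<le> Ct / real n"
proof -
  obtain K where K: "K > 0" "\<And>n. n \<ge> 1 \<Longrightarrow> Gamma (real n + a) \<le> K * (fact (n-1) * real n powr a)"
    using G_upper[OF a(1)] by blast
  have ga: "Gamma a > 0" using a by (intro Gamma_real_pos) auto
  show ?thesis
  proof (rule that[of "K / (a * Gamma a)"])
    show "K / (a * Gamma a) \<ge> 0" using K a ga by simp
    fix n :: nat assume n: "n \<ge> 2"
    have npos: "real n > 0" using n by simp
    have x: "real n + a - 1 > 0" using a n by simp
    have gp: "Gamma (real n + a - 1) > 0" using x by (rule Gamma_real_pos)
    have g1: "Gamma (real n + a) = (real n + a - 1) * Gamma (real n + a - 1)"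
      using Gamma_rec_pos[of "real n + a - 1"] x by simp
    have "\<bar>1 - (\<Sum>k=1..n-1. p_xi a k)\<bar> = Gamma (real n + a - 1) / (Gamma a * fact n)"
      using p_xi_partial_sum[OF a, of n] n gp ga by simp
    also have "Gamma (real n + a - 1) = Gamma (real n + a) / (real n + a - 1)" using g1 x by simp
    also have "\<dots> \<le> K * (fact (n-1) * real n powr a) / (a * real n)"
    proof (rule frac_le)
      show "0 \<le> K * (fact (n-1) * real n powr a)" using K by simp
      show "Gamma (real n + a) \<le> K * (fact (n-1) * real n powr a)" using K(2) n by simp
      show "0 < a * real n" using a npos by simp
      have "real n + a - 1 - a * real n = (real n - 1) * (1 - a)" by (simp add: algebra_simps)
      also have "\<dots> \<ge> 0" using n a by simp
      finally show "a * real n \<le> real n + a - 1" by simp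
    qed
    finally have "\<bar>1 - (\<Sum>k=1..n-1. p_xi a k)\<bar> \<le> K * (fact (n-1) * real n powr a) / (a * real n) / (Gamma a * fact n)"
      using ga by (simp add: divide_right_mono)
    also have "fact n = real n * fact (n-1)"
      using fact_reduce[of n] n by simp
    also have "K * (fact (n-1) * real n powr a) / (a * real n) / (Gamma a * (real n * fact (n-1)))
        = K / (a * Gamma a) * (real n powr a / (real n * real n))"
      using npos by (simp add: field_simps)
    also have "real n powr a / (real n * real n) \<le> 1 / real n"
    proof -
      have "real n powr a \<le> real n powr 1" using a n by (intro powr_mono) auto
      thus ?thesis using npos by (simp add: field_simps)
    qed
    finally show "\<bar>1 - (\<Sum>k=1..n-1. p_xi a k)\<bar> \<le> K / (a * Gamma a) / real n"
      using K a ga by (simp add: mult_left_mono divide_inverse)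
  qed
qed

definition rr :: "real \<Rightarrow> nat \<Rightarrow> real" where
  "rr b m = Gamma (real m + b) / fact m"

lemma rr_pos: "b > 0 \<Longrightarrow> rr b m > 0"
  unfolding rr_def by (intro divide_pos_pos Gamma_real_pos) auto

lemma rr_Suc: assumes b: "b > 0" shows "rr b (Suc m) = rr b m * ((real m + b) / (real m + 1))"
proof -
  have "Gamma (real (Suc m) + b) = (real m + b) * Gamma (real m + b)"
    using Gamma_rec_pos[of "real m + b"] b by (simp add: add_ac)
  thus ?thesis by (simp add: rr_def field_simps)
qed

lemma aux3: fixes gg pp ff uu vv :: real
  assumes "pp>0" "ff>0" "uu>0" "vv>0"
  shows "gg/ff = (vv*gg)/(ff*(pp*uu))*pp*(uu/vv)"
  using assms by (simp add: field_simps)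
lemma aux4: fixes L x y d :: real
  assumes "L \<ge> 0" "x \<ge> y" "y > 0" "A \<le> L / x + L * d / y"
  shows "A \<le> L * (d + 1) / y"
proof -
  have "L / x \<le> L / y" using assms by (intro divide_left_mono) auto
  hence "A \<le> L / y + L * d / y" using assms by linarith
  thus ?thesis by (simp add: algebra_simps add_divide_distrib)
qed

lemma rr_bounds:
  fixes b :: real assumes b: "b > 0"
  obtains c1 c2 where "c1 > 0" "c2 \<ge> 0"
    "\<And>m. rr b m \<le> c2 * (real m + 1) powr (b-1)"
    "\<And>m. c1 * (real m + 1) powr (b-1) \<le> rr b m"
proof -
  obtain K where K: "K > 0" "\<And>n. n \<ge> 1 \<Longrightarrow> Gamma (real n + b) \<le> K * (fact (n-1) * real n powr b)"
    using G_upper[OF b] by blast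
  obtain c where c: "c > 0" "\<And>n. n \<ge> 1 \<Longrightarrow> c * (fact (n-1) * real n powr b) \<le> Gamma (real n + b)"
    using G_lower[OF b] by blast
  have key: "rr b m = Gamma (real (Suc m) + b) / (fact m * (real m + 1) powr b) * (real m + 1) powr (b-1) * ((real m + 1) / (real m + b))" for m
  proof -
    have e1: "Gamma (real (Suc m) + b) = (real m + b) * Gamma (real m + b)"
      using Gamma_rec_pos[of "real m + b"] b by (simp add: add_ac)
    have e2: "(real m + 1) powr b = (real m + 1) powr (b-1) * (real m + 1)"
    proof -
      have "(real m + 1) powr b = (real m + 1) powr ((b-1) + 1)" by simp
      also have "\<dots> = (real m + 1) powr (b-1) * (real m + 1) powr 1" by (rule powr_add)
      finally show ?thesis by simp
    qed
    show ?thesis unfolding e1 e2 rr_def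
      using b by (auto intro!: aux3)
  qed
  have q1: "(real m + 1) / (real m + b) \<le> 1 + 1/b" for m
    using b by (simp add: field_simps)
  have q2: "(real m + 1) / (real m + b) \<ge> 1 / (1 + b)" for m
    using b by (simp add: field_simps)
  show ?thesis
  proof (rule that[of "c / (1+b)" "K * (1 + 1/b)"])
    show "c / (1+b) > 0" "K * (1 + 1/b) \<ge> 0" using c K b by auto
    fix m :: nat
    have fp: "fact m * (real m + 1) powr b > 0" by simp
    have U: "Gamma (real (Suc m) + b) / (fact m * (real m + 1) powr b) \<le> K"
      using K(2)[of "Suc m"] fp by (simp add: divide_le_eq add_ac)
    have Lo: "c \<le> Gamma (real (Suc m) + b) / (fact m * (real m + 1) powr b)"
      using c(2)[of "Suc m"] fp by (simp add: le_divide_eq add_ac)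
    have pw: "(real m + 1) powr (b-1) > 0" by simp
    have qp: "(real m + 1) / (real m + b) > 0" using b by simp
    have "rr b m \<le> K * (real m + 1) powr (b-1) * (1 + 1/b)"
      unfolding key using U q1 pw qp K by (intro mult_mono) auto
    thus "rr b m \<le> K * (1 + 1/b) * (real m + 1) powr (b-1)" by (simp add: mult_ac)
    have "c * (real m + 1) powr (b-1) * (1 / (1+b)) \<le> rr b m"
    proof -
      have h1: "c * (real m + 1) powr (b-1) \<le> Gamma (real (Suc m) + b) / (fact m * (real m + 1) powr b) * (real m + 1) powr (b-1)"
        using Lo pw by (intro mult_right_mono) auto
      have h2: "0 \<le> Gamma (real (Suc m) + b) / (fact m * (real m + 1) powr b) * (real m + 1) powr (b-1)"
        using c Lo pw by (intro mult_nonneg_nonneg) auto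
      show ?thesis unfolding key by (rule mult_mono[OF h1 q2 h2]) (use b in simp)
    qed
    thus "c / (1+b) * (real m + 1) powr (b-1) \<le> rr b m" by (simp add: field_simps)
  qed
qed

lemma rr_ln_step:
  fixes b :: real assumes b: "b > 0"
  shows "\<bar>ln (rr b (Suc m)) - ln (rr b m)\<bar> \<le> \<bar>b - 1\<bar> * (1 + 1/b) / (real m + 1)"
proof -
  define x where "x = (real m + b) / (real m + 1)"
  have xpos: "x > 0" using b by (simp add: x_def)
  have "rr b (Suc m) = rr b m * x" by (simp add: rr_Suc[OF b] x_def)
  moreover have "ln (rr b m * x) = ln (rr b m) + ln x"
    using rr_pos[OF b, of m] xpos by (simp add: ln_mult)
  ultimately have "ln (rr b (Suc m)) - ln (rr b m) = ln x" by simp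
  moreover have "\<bar>ln x\<bar> \<le> \<bar>b - 1\<bar> * (1 + 1/b) / (real m + 1)"
  proof (cases "b \<ge> 1")
    case True
    hence "x \<ge> 1" by (simp add: x_def)
    hence "\<bar>ln x\<bar> = ln x" by simp
    also have "\<dots> \<le> x - 1" using xpos by (rule ln_le_minus_one)
    also have "\<dots> = (b - 1) / (real m + 1)" by (simp add: x_def field_simps)
    also have "\<dots> \<le> \<bar>b - 1\<bar> * (1 + 1/b) / (real m + 1)"
      using b True by (intro divide_right_mono) (auto simp: field_simps)
    finally show ?thesis .
  next
    case False
    hence x1: "x \<le> 1" by (simp add: x_def)
    have "\<bar>ln x\<bar> = ln (1/x)" using x1 xpos by (simp add: ln_div)
    also have "\<dots> \<le> 1/x - 1" using xpos by (intro ln_le_minus_one) auto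
    also have "\<dots> = (1 - b) / (real m + b)" using b by (simp add: x_def field_simps)
    also have "\<dots> \<le> (1 - b) * ((1 + 1/b) / (real m + 1))"
    proof -
      have h: "(b+1)*(real m+b) - b*(real m+1) = b*b + real m" by (simp add: algebra_simps)
      have "b*b + real m \<ge> 0" by simp
      hence w: "b*(real m+1) \<le> (b+1)*(real m+b)" using h by linarith
      have "1 / (real m + b) = (b+1) / ((b+1)*(real m+b))" using b by simp
      also have "\<dots> \<le> (b+1) / (b*(real m+1))"
        by (rule frac_le) (use b w in auto)
      also have "\<dots> = (1 + 1/b) / (real m + 1)" using b by (simp add: field_simps)
      finally have "1 / (real m + b) \<le> (1 + 1/b) / (real m + 1)" .
      thus ?thesis using False by (simp add: divide_inverse mult_left_mono)
    qed
    also have "\<dots> = \<bar>b - 1\<bar> * (1 + 1/b) / (real m + 1)" using False by simp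
    finally show ?thesis .
  qed
  ultimately show ?thesis by simp
qed

lemma rr_ln:
  fixes b :: real assumes b: "b > 0"
  shows "\<bar>ln (rr b (m+d)) - ln (rr b m)\<bar> \<le> (\<bar>b - 1\<bar> * (1 + 1/b)) * real d / (real m + 1)"
proof (induction d)
  case 0 thus ?case by simp
next
  case (Suc d)
  define L where "L = \<bar>b - 1\<bar> * (1 + 1/b)"
  have L0: "L \<ge> 0" using b by (simp add: L_def)
  have "\<bar>ln (rr b (m + Suc d)) - ln (rr b m)\<bar> \<le> \<bar>ln (rr b (Suc (m+d))) - ln (rr b (m+d))\<bar> + \<bar>ln (rr b (m+d)) - ln (rr b m)\<bar>"
    by simp
  also have "\<dots> \<le> L / (real (m+d) + 1) + L * real d / (real m + 1)"
    using rr_ln_step[OF b, of "m+d"] Suc by (intro add_mono) (auto simp: L_def)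
  finally have F: "\<bar>ln (rr b (m + Suc d)) - ln (rr b m)\<bar> \<le> L / (real (m+d) + 1) + L * real d / (real m + 1)" .
  have "\<bar>ln (rr b (m + Suc d)) - ln (rr b m)\<bar> \<le> L * (real d + 1) / (real m + 1)"
    by (rule aux4[OF L0 _ _ F]) auto
  thus ?case by (simp add: L_def add.commute)
qed

lemma pow_powr_mult: fixes x c :: real assumes "x \<ge> 0"
  shows "x ^ m * x powr c = x powr (real m + c)"
proof (cases "x = 0")
  case True thus ?thesis by simp
next
  case False
  hence xp: "x > 0" using assms by simp
  have "x ^ m = x powr (real m)" using xp by (simp add: powr_realpow)
  thus ?thesis by (simp add: powr_add)
qed

lemma lambda_nk_Beta:
  fixes a b :: real assumes a: "a > 0" and b: "b > 0" and j: "2 \<le> j" "j \<le> n"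
  shows "lambda_nk a b n j = Beta (real (j-2) + a) (real (n-j) + b) / Beta a b"
proof -
  define \<alpha> where "\<alpha> = real (j-2) + a"
  define \<beta> where "\<beta> = real (n-j) + b"
  have \<alpha>: "\<alpha> > 0" and \<beta>: "\<beta> > 0" using a b by (auto simp: \<alpha>_def \<beta>_def)
  define g where "g = (\<lambda>x::real. x powr (\<alpha> - 1) * (1 - x) powr (\<beta> - 1) / Beta a b)"
  have fg: "x ^ (j - 2) * (1 - x) ^ (n - j) * beta_density a b x = g x" if x: "x \<in> {0..1}" for x
  proof -
    have "x ^ (j - 2) * x powr (a - 1) = x powr (\<alpha> - 1)"
      using x pow_powr_mult[of x "j-2" "a-1"] by (simp add: \<alpha>_def algebra_simps)
    moreover have "(1 - x) ^ (n - j) * (1 - x) powr (b - 1) = (1 - x) powr (\<beta> - 1)"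
      using x pow_powr_mult[of "1-x" "n-j" "b-1"] by (simp add: \<beta>_def algebra_simps)
    ultimately show ?thesis
      unfolding g_def beta_density_def
      by (metis (no_types, lifting) mult.assoc mult.left_commute times_divide_eq_right)
  qed
  have int: "set_integrable lborel {0..1} g"
    unfolding g_def using integrable_Beta[OF \<alpha> \<beta>]
    by (simp add: divide_inverse set_integrable_mult_left)
  have hi: "(g has_integral Beta \<alpha> \<beta> / Beta a b) {0..1}"
    unfolding g_def by (intro has_integral_divide has_integral_Beta_real \<alpha> \<beta>)
  have "lambda_nk a b n j = (LBINT x:{0..1}. x ^ (j - 2) * (1 - x) ^ (n - j) * beta_density a b x)"
    unfolding lambda_nk_def using interval_integral_Icc[of "0::real" 1 "\<lambda>x. x ^ (j - 2) * (1 - x) ^ (n - j) * beta_density a b x"]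
    by (simp add: zero_ereal_def one_ereal_def)
  also have "\<dots> = (LBINT x:{0..1}. g x)"
    by (rule set_lebesgue_integral_cong) (use fg in auto)
  also have "\<dots> = integral {0..1} g" by (rule set_borel_integral_eq_integral(2)[OF int])
  also have "\<dots> = Beta \<alpha> \<beta> / Beta a b" using hi by (rule integral_unique)
  finally show ?thesis by (simp add: \<alpha>_def \<beta>_def)
qed

lemma aux5: fixes F Fk Fm Gx Gy Gs Ga B a :: real
  assumes "Fk > 0" "Fm > 0" "Gs > 0" "B > 0" "Ga > 0" "2 - a > 0"
  shows "F / (Fk * Fm) * (Gx * Gy / Gs / B) = (F * Ga / ((2 - a) * Gs * B)) * ((2 - a) * Gx / (Ga * Fk) * (Gy / Fm))"
  using assms by (simp add: field_simps)

lemma T_repr: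
  fixes a b :: real assumes a: "0 < a" "a \<le> 1" and b: "b > 0" and n: "n \<ge> 2" and k: "1 \<le> k" "k \<le> n - 1"
  shows "real (n choose (k+1)) * lambda_nk a b n (k+1)
     = (fact n * Gamma a / ((2 - a) * Gamma (real n + a + b - 2) * Beta a b)) * (p_xi a k * rr b (n-1-k))"
proof -
  have lam: "lambda_nk a b n (k+1) = Beta (real (k+1-2) + a) (real (n-(k+1)) + b) / Beta a b"
    by (rule lambda_nk_Beta) (use a b k n in auto)
  have e1: "real (k+1-2) + a = real k + a - 1" using k by (simp add: of_nat_diff)
  have e2: "real (n-(k+1)) + b = real (n-1-k) + b" by simp
  have e3: "real k + a - 1 + (real (n-1-k) + b) = real n + a + b - 2" using k by (simp add: of_nat_diff)
  have bin: "real (n choose (k+1)) = fact n / (fact (k+1) * fact (n-1-k))"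
  proof -
    have kn: "k+1 \<le> n" using k n by simp
    have "n - (k+1) = n-1-k" by simp
    thus ?thesis using binomial_fact[OF kn] by (simp only:)
  qed
  have Bp: "Beta a b > 0" using a b by (simp add: Beta_def)
  have Gs: "Gamma (real n + a + b - 2) > 0" using a b n by (intro Gamma_real_pos) auto
  have "real (n choose (k+1)) * lambda_nk a b n (k+1)
      = fact n / (fact (k+1) * fact (n-1-k)) * (Gamma (real k + a - 1) * Gamma (real (n-1-k) + b) / Gamma (real n + a + b - 2) / Beta a b)"
    unfolding bin lam e1 e2 Beta_def[of "real k + a - 1"] e3 by simp
  also have "\<dots> = (fact n * Gamma a / ((2 - a) * Gamma (real n + a + b - 2) * Beta a b))
      * ((2 - a) * Gamma (real k + a - 1) / (Gamma a * fact (k+1)) * (Gamma (real (n-1-k) + b) / fact (n-1-k)))"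
    by (rule aux5) (use Bp Gs a in auto)
  also have "(2 - a) * Gamma (real k + a - 1) / (Gamma a * fact (k+1)) * (Gamma (real (n-1-k) + b) / fact (n-1-k))
      = p_xi a k * rr b (n-1-k)" by (simp add: p_xi_def rr_def)
  finally show ?thesis .
qed

lemma prob_repr:
  fixes a b :: real assumes a: "0 < a" "a \<le> 1" and b: "b > 0" and n: "n \<ge> 2" and k: "1 \<le> k" "k \<le> n - 1"
  shows "first_decrement_prob a b n k = p_xi a k * rr b (n-1-k) / (\<Sum>j=1..n-1. p_xi a j * rr b (n-1-j))"
proof -
  define Q where "Q = fact n * Gamma a / ((2 - a) * Gamma (real n + a + b - 2) * Beta a b)"
  have Bp: "Beta a b > 0" using a b by (simp add: Beta_def)
  have Gs: "Gamma (real n + a + b - 2) > 0" using a b n by (intro Gamma_real_pos) auto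
  have Qp: "Q > 0" using a Bp Gs by (simp add: Q_def)
  have "{2..n} = {Suc 1..Suc (n-1)}" using n by auto
  hence "lambda_n a b n = (\<Sum>j=Suc 1..Suc (n-1). real (n choose j) * lambda_nk a b n j)"
    unfolding lambda_n_def by (simp only:)
  also have "\<dots> = (\<Sum>i=1..n-1. real (n choose (Suc i)) * lambda_nk a b n (Suc i))"
    by (rule sum.shift_bounds_cl_Suc_ivl)
  also have "\<dots> = (\<Sum>i=1..n-1. Q * (p_xi a i * rr b (n-1-i)))"
    by (intro sum.cong refl) (use T_repr[OF a b n] in \<open>auto simp: Q_def\<close>)
  also have "\<dots> = Q * (\<Sum>i=1..n-1. p_xi a i * rr b (n-1-i))" by (simp add: sum_distrib_left)
  finally have ln: "lambda_n a b n = Q * (\<Sum>i=1..n-1. p_xi a i * rr b (n-1-i))" .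
  have "first_decrement_prob a b n k = Q * (p_xi a k * rr b (n-1-k)) / lambda_n a b n"
    unfolding first_decrement_prob_def using T_repr[OF a b n k] by (simp add: Q_def)
  also have "\<dots> = p_xi a k * rr b (n-1-k) / (\<Sum>j=1..n-1. p_xi a j * rr b (n-1-j))"
    unfolding ln using Qp by simp
  finally show ?thesis .
qed

theorem lemma6p3:
  fixes a b q :: real
  assumes "0 < a" "a \<le> 1" "0 < b" "0 < q" "q \<le> 1" "q + a > 1"
  shows "(\<lambda>n::nat. \<Sum>k=1..n-1. real k powr q * \<bar>first_decrement_prob a b n k - p_xi a k\<bar>)
           \<in> O(\<lambda>n. real n powr (a + q - 2))"
proof -
  have a: "0 < a" "a \<le> 1" and b: "b > 0" and q: "0 < q" "q \<le> 1" and aq: "a + q > 1" using assms by auto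
  obtain c1 c2 where c: "c1 > 0" "c2 \<ge> 0"
    "\<And>m. rr b m \<le> c2 * (real m + 1) powr (b-1)"
    "\<And>m. c1 * (real m + 1) powr (b-1) \<le> rr b m"
    using rr_bounds[OF b] by blast
  define L where "L = \<bar>b - 1\<bar> * (1 + 1/b)"
  have L: "L \<ge> 0" using b by (simp add: L_def)
  have rl: "\<And>m d. \<bar>ln (rr b (m+d)) - ln (rr b m)\<bar> \<le> L * real d / (real m + 1)"
    unfolding L_def by (rule rr_ln[OF b])
  obtain Cp where Cp: "Cp \<ge> 0" "\<And>k. k \<ge> 1 \<Longrightarrow> p_xi a k \<le> Cp * real k powr (a-3)"
    using p_xi_le[OF a] by blast
  obtain Ct where Ct: "Ct \<ge> 0" "\<And>n. n \<ge> 2 \<Longrightarrow> \<bar>1 - (\<Sum>k=1..n-1. p_xi a k)\<bar> \<le> Ct / real n"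
    using p_xi_tail[OF a] by blast
  have pp: "\<And>k. k \<ge> 1 \<Longrightarrow> 0 < p_xi a k" using p_xi_pos[OF a] by blast
  have rp: "\<And>m. rr b m > 0" using rr_pos[OF b] by blast
  obtain C where C: "\<forall>n\<ge>2. (\<Sum>k=1..n-1. real k powr q * \<bar>p_xi a k * rr b (n-1-k) / (\<Sum>j=1..n-1. p_xi a j * rr b (n-1-j)) - p_xi a k\<bar>)
            \<le> C * real n powr (a+q-2)"
    using main_est[OF rp c(3) c(4) c(1) c(2) rl L pp Cp(2) Cp(1) Ct(2) Ct(1) a q aq b] by blast
  show ?thesis
  proof (rule bigoI[where c = C])
    show "\<forall>\<^sub>F n in at_top. norm (\<Sum>k=1..n-1. real k powr q * \<bar>first_decrement_prob a b n k - p_xi a k\<bar>)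
            \<le> C * norm (real n powr (a + q - 2))"
      using eventually_ge_at_top[of "2::nat"]
    proof eventually_elim
      case (elim n)
      have "(\<Sum>k=1..n-1. real k powr q * \<bar>first_decrement_prob a b n k - p_xi a k\<bar>)
          = (\<Sum>k=1..n-1. real k powr q * \<bar>p_xi a k * rr b (n-1-k) / (\<Sum>j=1..n-1. p_xi a j * rr b (n-1-j)) - p_xi a k\<bar>)"
        by (intro sum.cong refl) (use prob_repr[OF a b elim] in auto)
      moreover have "(\<Sum>k=1..n-1. real k powr q * \<bar>first_decrement_prob a b n k - p_xi a k\<bar>) \<ge> 0"
        by (intro sum_nonneg) simp
      ultimately show ?case using C elim by simp
    qed
  qed
qed


end
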